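(* Let $V$ be a countable dimensional vector space with a fixed basis $E$. On the set of generalized flags in $V$ that are weakly compatible with $E$, the relation of $E$-commensurability is an equivalence relation. Moreover, in the definition of $E$-commensurability, condition (ii) may equivalently be replaced by (ii$'$): $\dim(F/(F\cap\varphi(F)))=\dim(\varphi(F)/(F\cap\varphi(F)))$ for every $F\in\mathcal{F}$.
   Context: $k$ is a field of characteristic $0$. A chain of subspaces is a set of pairwise distinct subspaces totally ordered by inclusion; $\mathcal{C}'$ (resp. $\mathcal{C}''$) denotes elements with an immediate successor (resp. predecessor), $F^+$ the immediate successor of $F\in\mathcal{C}'$. A generalized flag is a chain $\mathcal{F}$ with $\mathcal{F}=\mathcal{F}'\cup\mathcal{F}''$ and $V\setminus\{0\}=\bigcup_{F\in\mathcal{F}'}(F^+\setminus F)$; for $v\ne0$, $F'_v$ is the unique $F\in\mathcal{F}'$ with $v\in F^+\setminus F$. For a chain $\mathcal{C}$, $[v]_\mathcal{C}:=\{u:\forall C\in\mathcal{C},\ u\in C\iff v\in C\}$ and $fl(\mathcal{C})$ is the unique generalized flag inducing the same partition. A basis $\{e_\alpha\}_{\alpha\in A}$ is compatible with $\mathcal{F}$ if there is a strict partial order $\prec$ on $A$ (incomparability being an equivalence relation) with $F'_{e_\alpha}=\mathrm{span}\{e_\beta:\beta\prec\alpha\}$ and $\mathcal{F}=fl(\{F'_{e_\alpha}\})$. A generalized flag $\mathcal{F}$ is weakly compatible with $E$ if it is compatible with some basis $L$ of $V$ such that $E\setminus(E\cap L)$ is finite. Two generalized flags $\mathcal{F},\mathcal{G}$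 are $E$-commensurable if both are weakly compatible with $E$ and there exist an inclusion-preserving bijection $\varphi:\mathcal{F}\to\mathcal{G}$ and a finite dimensional subspace $U\subset V$ such that for every $F\in\mathcal{F}$: (i) $F\subset\varphi(F)+U$ and $\varphi(F)\subset F+U$; (ii) $\dim(F\cap U)=\dim(\varphi(F)\cap U)$. *)

theory Defs
  imports "HOL-Library.Extended_Nat"
begin

text \<open>The vector space V is the whole carrier type 'v, with scalar multiplication
  scale over a field 'k (characteristic 0 is imposed in the theorem via field_char_0).\<close>

context
  fixes scale :: "'k::field \<Rightarrow> 'v::ab_group_add \<Rightarrow> 'v"
begin

abbreviation "Span \<equiv> module.span scale"
abbreviation "Subsp \<equiv> module.subspace scale"
abbreviation "Indep \<equiv> \<lambda>S. \<not> module.dependent scale S"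
abbreviation "Dim \<equiv> vector_space.dim scale"

definition is_basis :: "'v set \<Rightarrow> bool" where
  "is_basis L \<longleftrightarrow> Indep L \<and> Span L = UNIV"

definition fin_dim :: "'v set \<Rightarrow> bool" where
  "fin_dim U \<longleftrightarrow> (\<exists>S. finite S \<and> U = Span S)"

text \<open>A chain of subspaces (pairwise distinct automatically, being a set).\<close>
definition is_chain :: "'v set set \<Rightarrow> bool" where
  "is_chain C \<longleftrightarrow> (\<forall>A\<in>C. Subsp A) \<and> (\<forall>A\<in>C. \<forall>B\<in>C. A \<subseteq> B \<or> B \<subseteq> A)"

definition imm_succ :: "'v set set \<Rightarrow> 'v set \<Rightarrow> 'v set \<Rightarrow> bool" where
  "imm_succ C F G \<longleftrightarrow> F \<in> C \<and> G \<in> C \<and> F \<subset> G \<and> \<not> (\<exists>H\<in>C. F \<subset> H \<and> H \<subset> G)"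

definition has_succ :: "'v set set \<Rightarrow> 'v set set" where
  "has_succ C = {F. \<exists>G. imm_succ C F G}"

definition has_pred :: "'v set set \<Rightarrow> 'v set set" where
  "has_pred C = {G. \<exists>F. imm_succ C F G}"

definition succ :: "'v set set \<Rightarrow> 'v set \<Rightarrow> 'v set" where
  "succ C F = (THE G. imm_succ C F G)"

definition gen_flag :: "'v set set \<Rightarrow> bool" where
  "gen_flag \<F> \<longleftrightarrow> is_chain \<F> \<and> \<F> = has_succ \<F> \<union> has_pred \<F> \<and>
     UNIV - {0} = (\<Union>F\<in>has_succ \<F>. succ \<F> F - F)"

definition Fprime :: "'v set set \<Rightarrow> 'v \<Rightarrow> 'v set" where
  "Fprime \<F> v = (THE F. F \<in> has_succ \<F> \<and> v \<in> succ \<F> F - F)"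

definition cls :: "'v set set \<Rightarrow> 'v \<Rightarrow> 'v set" where
  "cls C v = {u. \<forall>A\<in>C. u \<in> A \<longleftrightarrow> v \<in> A}"

definition partition_of :: "'v set set \<Rightarrow> 'v set set" where
  "partition_of C = range (cls C)"

definition fl :: "'v set set \<Rightarrow> 'v set set" where
  "fl C = (THE \<F>. gen_flag \<F> \<and> partition_of \<F> = partition_of C)"

text \<open>A basis L (indexed by itself) is compatible with the generalized flag \<F>.\<close>
definition compatible :: "'v set set \<Rightarrow> 'v set \<Rightarrow> bool" where
  "compatible \<F> L \<longleftrightarrow> gen_flag \<F> \<and> is_basis L \<and>
     (\<exists>prec :: 'v \<Rightarrow> 'v \<Rightarrow> bool.
        (\<forall>a\<in>L. \<not> prec a a) \<and>
        (\<forall>a\<in>L. \<forall>b\<in>L. \<forall>c\<in>L. prec a b \<and> prec b c \<longrightarrow> prec a c) \<and>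
        equiv L {(a, b). a \<in> L \<and> b \<in> L \<and> \<not> prec a b \<and> \<not> prec b a} \<and>
        (\<forall>a\<in>L. Fprime \<F> a = Span {b\<in>L. prec b a}) \<and>
        \<F> = fl (Fprime \<F> ` L))"

definition weakly_compatible :: "'v set set \<Rightarrow> 'v set \<Rightarrow> bool" where
  "weakly_compatible \<F> E \<longleftrightarrow> gen_flag \<F> \<and> (\<exists>L. compatible \<F> L \<and> finite (E - E \<inter> L))"

definition sumset :: "'v set \<Rightarrow> 'v set \<Rightarrow> 'v set" where
  "sumset A B = {a + b | a b. a \<in> A \<and> b \<in> B}"

text \<open>dim (A / B) for subspaces B \<subseteq> A, as an extended natural: the minimal size of a
  finite set S \<subseteq> A with A \<subseteq> span (B \<union> S), or \<infinity> if there is none.\<close>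
definition quot_dim :: "'v set \<Rightarrow> 'v set \<Rightarrow> enat" where
  "quot_dim A B = (if \<exists>S. finite S \<and> S \<subseteq> A \<and> A \<subseteq> Span (B \<union> S)
     then enat (LEAST n. \<exists>S. finite S \<and> S \<subseteq> A \<and> A \<subseteq> Span (B \<union> S) \<and> card S = n)
     else \<infinity>)"

definition commensurable :: "'v set \<Rightarrow> 'v set set \<Rightarrow> 'v set set \<Rightarrow> bool" where
  "commensurable E \<F> \<G> \<longleftrightarrow> weakly_compatible \<F> E \<and> weakly_compatible \<G> E \<and>
     (\<exists>\<phi> U. bij_betw \<phi> \<F> \<G> \<and> (\<forall>F1\<in>\<F>. \<forall>F2\<in>\<F>. F1 \<subseteq> F2 \<longrightarrow> \<phi> F1 \<subseteq> \<phi> F2) \<and>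
        Subsp U \<and> fin_dim U \<and>
        (\<forall>F\<in>\<F>. F \<subseteq> sumset (\<phi> F) U \<and> \<phi> F \<subseteq> sumset F U \<and>
                 Dim (F \<inter> U) = Dim (\<phi> F \<inter> U)))"

definition commensurable' :: "'v set \<Rightarrow> 'v set set \<Rightarrow> 'v set set \<Rightarrow> bool" where
  "commensurable' E \<F> \<G> \<longleftrightarrow> weakly_compatible \<F> E \<and> weakly_compatible \<G> E \<and>
     (\<exists>\<phi> U. bij_betw \<phi> \<F> \<G> \<and> (\<forall>F1\<in>\<F>. \<forall>F2\<in>\<F>. F1 \<subseteq> F2 \<longrightarrow> \<phi> F1 \<subseteq> \<phi> F2) \<and>
        Subsp U \<and> fin_dim U \<and>
        (\<forall>F\<in>\<F>. F \<subseteq> sumset (\<phi> F) U \<and> \<phi> F \<subseteq> sumset F U \<and>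
                 quot_dim F (F \<inter> \<phi> F) = quot_dim (\<phi> F) (F \<inter> \<phi> F)))"

end

end

theory Submission
  imports Defs
begin

definition cmpl :: "('k::field \<Rightarrow> 'v::ab_group_add \<Rightarrow> 'v) \<Rightarrow> 'v set \<Rightarrow> 'v set \<Rightarrow> 'v set \<Rightarrow> bool" where
  "cmpl scale A B S \<longleftrightarrow> finite S \<and> S \<subseteq> A \<and> A \<subseteq> module.span scale (B \<union> S) \<and>
     \<not> module.dependent scale S \<and> module.span scale S \<inter> B \<subseteq> {0}"

context vector_space
begin

lemma span_Un_span2: "span (A \<union> span B) = span (A \<union> B)"
proof
  show "span (A \<union> span B) \<subseteq> span (A \<union> B)"
  proof (rule span_minimal)
    show "A \<union> span B \<subseteq> span (A \<union> B)"
      using span_superset[of "A \<union> B"] span_mono[of B "A \<union> B"] by blast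
  qed simp
  show "span (A \<union> B) \<subseteq> span (A \<union> span B)"
    by (rule span_mono) (use span_superset[of B] in blast)
qed

lemma span_sub: "subspace A \<Longrightarrow> span A = A"
  by simp

lemma sumset_span: assumes "subspace A" "subspace B" shows "sumset A B = span (A \<union> B)"
proof -
  have e: "span A = A" "span B = B" using assms by simp_all
  show ?thesis unfolding sumset_def span_Un e by simp
qed

lemma finite_span_subset:
  assumes "finite S" "S \<subseteq> span X"
  shows "\<exists>X0. finite X0 \<and> X0 \<subseteq> X \<and> S \<subseteq> span X0"
  using assms
proof (induction S rule: finite_induct)
  case empty then show ?case by auto
next
  case (insert a S)
  then obtain X0 where X0: "finite X0" "X0 \<subseteq> X" "S \<subseteq> span X0" by auto
  from insert have "a \<in> span X" by auto
  then obtain t r where t: "a = (\<Sum>v\<in>t. r v *s v)" "finite t" "t \<subseteq> X"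
    unfolding span_explicit by auto
  have "a \<in> span t" using t by (auto intro: span_sum span_scale span_base)
  then show ?case using X0 t
    by (intro exI[of _ "X0 \<union> t"]) (auto intro: span_mono[THEN subsetD])
qed

lemma disj_indep_span_Int:
  assumes "finite S" "independent (S \<union> C)" "S \<inter> C = {}"
  shows "span S \<inter> span C \<subseteq> {0}"
  using assms
proof (induction S rule: finite_induct)
  case empty then show ?case by auto
next
  case (insert a S)
  have "independent (S \<union> C)" using independent_mono[OF insert(4)] by auto
  then have IH: "span S \<inter> span C \<subseteq> {0}"
    using insert by auto
  show ?case
  proof
    fix x assume x: "x \<in> span (insert a S) \<inter> span C"
    then obtain k where k: "x - k *s a \<in> span S" using span_breakdown_eq by auto
    show "x \<in> {0}"
    proof (cases "k = 0")
      case True then show ?thesis using k x IH by auto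
    next
      case False
      have "x \<in> span (C \<union> S)" using x span_mono[of C "C \<union> S"] by auto
      moreover have "x - k *s a \<in> span (C \<union> S)" using k span_mono[of S "C \<union> S"] by auto
      ultimately have "x - (x - k *s a) \<in> span (C \<union> S)" by (rule span_diff)
      then have "k *s a \<in> span (C \<union> S)" by simp
      then have "(1/k) *s (k *s a) \<in> span (C \<union> S)" by (rule span_scale)
      then have "a \<in> span (C \<union> S)" using False by simp
      moreover have "C \<union> S \<subseteq> (insert a S \<union> C) - {a}" using insert by auto
      ultimately have "a \<in> span ((insert a S \<union> C) - {a})" using span_mono by blast
      then have "dependent (insert a S \<union> C)" unfolding dependent_def by auto
      then show ?thesis using insert by auto
    qed
  qed
qed

lemma indep_Un_fin:
  assumes "finite S" "independent S" "independent C" "span S \<inter> span C \<subseteq> {0}"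
  shows "independent (C \<union> S)"
  using assms
proof (induction S rule: finite_induct)
  case empty then show ?case by auto
next
  case (insert a S)
  have iS: "independent S" using independent_mono[OF insert(4)] by auto
  have sS: "span S \<inter> span C \<subseteq> {0}" using insert(6) span_mono[of S "insert a S"] by auto
  have IH: "independent (C \<union> S)" using insert iS sS by auto
  have a0: "a \<noteq> 0" using insert(4) dependent_zero by auto
  have "a \<notin> span (C \<union> S)"
  proof
    assume "a \<in> span (C \<union> S)"
    then obtain c y where cy: "a = c + y" "c \<in> span C" "y \<in> span S" unfolding span_Un by auto
    have "a \<in> span (insert a S)" by (simp add: span_base)
    moreover have "y \<in> span (insert a S)" using cy span_mono[of S "insert a S"] by auto
    ultimately have "a - y \<in> span (insert a S)" by (rule span_diff)
    then have "c \<in> span (insert a S) \<inter> span C" using cy by (simp add: algebra_simps)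
    then have "c = 0" using insert(6) by auto
    then have "a \<in> span S" using cy by simp
    moreover have "insert a S - {a} = S" using insert(2) by auto
    ultimately have "dependent (insert a S)" unfolding dependent_def by auto
    then show False using insert(4) by auto
  qed
  then show ?case using IH by (auto simp: independent_insert)
qed

lemma sumset_memI: "a \<in> A \<Longrightarrow> b \<in> B \<Longrightarrow> a + b \<in> sumset A B"
  unfolding sumset_def by blast

lemma sumset_memE:
  assumes "x \<in> sumset A B" obtains a b where "x = a + b" "a \<in> A" "b \<in> B"
  using assms unfolding sumset_def by blast

lemma quot_dim_compl:
  assumes "subspace B" "cmpl scale A B S"
  shows "quot_dim scale A B = enat (card S)"
proof -
  have S: "finite S" "S \<subseteq> A" "A \<subseteq> span (B \<union> S)" "independent S" "span S \<inter> B \<subseteq> {0}"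
    using assms(2) unfolding cmpl_def by blast+
  obtain C where C: "C \<subseteq> B" "independent C" "B \<subseteq> span C" "card C = dim B" by (rule basis_exists)
  have spC: "span C = B" by (rule span_subspace[OF C(1) C(3) assms(1)])
  have iCS: "independent (C \<union> S)" using indep_Un_fin[OF S(1) S(4) C(2)] S(5) spC by auto
  have S0: "0 \<notin> S" using S(4) dependent_zero[of S] by auto
  have min: "card S \<le> card T" if T: "finite T" "T \<subseteq> A" "A \<subseteq> span (B \<union> T)" for T
  proof -
    have "span (T \<union> B) = span (T \<union> C)" using span_Un_span2[of T C] unfolding spC .
    then have eqBC: "span (B \<union> T) = span (C \<union> T)" by (simp add: Un_commute)
    have SCT: "S \<subseteq> span (C \<union> T)" using S(2) T(3) unfolding eqBC by (rule order_trans)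
    obtain X0 where X0: "finite X0" "X0 \<subseteq> C \<union> T" "S \<subseteq> span X0"
      using finite_span_subset[OF S(1) SCT] by blast
    define C0 where "C0 = X0 \<inter> C"
    have fC0: "finite C0" using X0(1) by (simp add: C0_def)
    have "X0 \<subseteq> C0 \<union> T" using X0(2) by (auto simp: C0_def)
    then have "S \<subseteq> span (C0 \<union> T)" using X0(3) span_mono[of X0 "C0 \<union> T"] by (rule_tac order_trans) auto
    moreover have "C0 \<subseteq> span (C0 \<union> T)" using span_superset[of "C0 \<union> T"] by blast
    ultimately have sub: "C0 \<union> S \<subseteq> span (C0 \<union> T)" by (rule Un_least[rotated])
    have "independent (C0 \<union> S)" by (rule independent_mono[OF iCS]) (auto simp: C0_def)
    then have "card (C0 \<union> S) \<le> card (C0 \<union> T)"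
      using independent_span_bound[OF _ _ sub] fC0 T(1) by auto
    also have "\<dots> \<le> card C0 + card T" by (rule card_Un_le)
    finally have 1: "card (C0 \<union> S) \<le> card C0 + card T" .
    have "C0 \<inter> S = {}"
    proof -
      { fix x assume x: "x \<in> C0" "x \<in> S"
        have "x \<in> B" using x(1) C(1) by (auto simp: C0_def)
        then have "x \<in> span S \<inter> B" using span_base[OF x(2)] by blast
        then have "x = 0" using S(5) by blast
        with x S0 have False by simp }
      then show ?thesis by blast
    qed
    then have "card (C0 \<union> S) = card C0 + card S" using card_Un_disjoint[OF fC0 S(1)] by simp
    with 1 show ?thesis by simp
  qed
  have ex: "\<exists>S'. finite S' \<and> S' \<subseteq> A \<and> A \<subseteq> span (B \<union> S')" using S(1,2,3) by blast
  have L: "(LEAST n. \<exists>S'. finite S' \<and> S' \<subseteq> A \<and> A \<subseteq> span (B \<union> S') \<and> card S' = n) = card S"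
  proof (rule Least_equality)
    show "\<exists>S'. finite S' \<and> S' \<subseteq> A \<and> A \<subseteq> span (B \<union> S') \<and> card S' = card S" using S(1,2,3) by blast
  next
    fix y assume "\<exists>S'. finite S' \<and> S' \<subseteq> A \<and> A \<subseteq> span (B \<union> S') \<and> card S' = y"
    then obtain S' where S': "finite S'" "S' \<subseteq> A" "A \<subseteq> span (B \<union> S')" "card S' = y" by blast
    show "card S \<le> y" using min[OF S'(1,2,3)] S'(4) by simp
  qed
  show ?thesis unfolding quot_dim_def if_P[OF ex] L ..
qed

lemma compl_exists:
  assumes "subspace B" "finite T" "T \<subseteq> A" "A \<subseteq> span (B \<union> T)"
  shows "\<exists>S. cmpl scale A B S"
proof -
  obtain C where C: "C \<subseteq> B" "independent C" "B \<subseteq> span C" "card C = dim B" by (rule basis_exists)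
  have spC: "span C = B" by (rule span_subspace[OF C(1) C(3) assms(1)])
  obtain D where D: "C \<subseteq> D" "D \<subseteq> C \<union> T" "independent D" "C \<union> T \<subseteq> span D"
    by (rule maximal_independent_subset_extend[OF Un_upper1 C(2)])
  define S where "S = D - C"
  have ST: "S \<subseteq> T" using D(2) by (auto simp: S_def)
  have fS: "finite S" using finite_subset[OF ST assms(2)] .
  have "span (T \<union> B) = span (T \<union> C)" using span_Un_span2[of T C] unfolding spC .
  then have "span (B \<union> T) = span (C \<union> T)" by (simp add: Un_commute)
  then have "A \<subseteq> span (C \<union> T)" using assms(4) by simp
  also have "span (C \<union> T) \<subseteq> span D" by (rule span_minimal[OF D(4) subspace_span])
  also have "span D \<subseteq> span (B \<union> S)" by (rule span_mono) (use C(1) in \<open>auto simp: S_def\<close>)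
  finally have 1: "A \<subseteq> span (B \<union> S)" .
  have SC: "S \<union> C = D" "S \<inter> C = {}" using D(1) by (auto simp: S_def)
  have "independent (S \<union> C)" using D(3) SC(1) by simp
  then have "span S \<inter> span C \<subseteq> {0}" by (rule disj_indep_span_Int[OF fS _ SC(2)])
  then have 2: "span S \<inter> B \<subseteq> {0}" using spC by simp
  have 3: "independent S" by (rule independent_mono[OF D(3)]) (auto simp: S_def)
  have "S \<subseteq> A" using ST assms(3) by (rule order_trans)
  then have "cmpl scale A B S" unfolding cmpl_def using fS 1 2 3 by blast
  then show ?thesis by blast
qed

lemma fin_reduce:
  assumes "subspace A" "subspace B" "B \<subseteq> A" "finite T" "A \<subseteq> span (B \<union> T)"
  shows "\<exists>S. finite S \<and> S \<subseteq> A \<and> A \<subseteq> span (B \<union> S)"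
proof -
  obtain S where S: "S \<subseteq> span T \<inter> A" "independent S" "span T \<inter> A \<subseteq> span S" "card S = dim (span T \<inter> A)"
    by (rule basis_exists)
  have "S \<subseteq> span T" using S(1) by blast
  then have fS: "finite S" using independent_span_bound[OF assms(4) S(2)] by blast
  have "A \<subseteq> span (B \<union> S)"
  proof
    fix a assume a: "a \<in> A"
    then have "a \<in> span (B \<union> T)" using assms(5) by blast
    then obtain b x where bx: "a = b + x" "b \<in> span B" "x \<in> span T"
      unfolding span_Un by blast
    have bA: "b \<in> A" using bx(2)[unfolded span_sub[OF assms(2)]] assms(3) by blast
    have "x = a - b" using bx(1) by (simp add: algebra_simps)
    then have "x \<in> A" using subspace_diff[OF assms(1) a bA] by simp
    then have "x \<in> span S" using S(3) bx(3) by blast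
    then have "x \<in> span (B \<union> S)" using span_mono[of S "B \<union> S"] by blast
    moreover have "b \<in> span (B \<union> S)" using bx(2) span_mono[of B "B \<union> S"] by blast
    ultimately have "b + x \<in> span (B \<union> S)" by (rule span_add[rotated])
    then show "a \<in> span (B \<union> S)" using bx(1) by simp
  qed
  then show ?thesis using fS S(1) by blast
qed

lemma compl_exists2:
  assumes "subspace A" "subspace B" "B \<subseteq> A" "finite T" "A \<subseteq> span (B \<union> T)"
  shows "\<exists>S. cmpl scale A B S"
proof -
  obtain S where "finite S" "S \<subseteq> A" "A \<subseteq> span (B \<union> S)" using fin_reduce[OF assms] by blast
  then show ?thesis by (rule compl_exists[OF assms(2)])
qed

lemma quot_add:
  assumes "subspace A" "subspace B" "subspace C" "B \<subseteq> A" "A \<subseteq> C" "finite T" "C \<subseteq> span (B \<union> T)"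
  shows "\<exists>n m. quot_dim scale C A = enat n \<and> quot_dim scale A B = enat m \<and> quot_dim scale C B = enat (n + m)"
proof -
  have "span (B \<union> T) \<subseteq> span (A \<union> T)" by (rule span_mono) (use assms(4) in blast)
  then have "C \<subseteq> span (A \<union> T)" using assms(7) by blast
  then obtain S2 where S2: "cmpl scale C A S2" using compl_exists2[OF assms(3,1,5,6)] by blast
  have "A \<subseteq> span (B \<union> T)" using assms(5,7) by blast
  then obtain S1 where S1: "cmpl scale A B S1" using compl_exists2[OF assms(1,2,4,6)] by blast
  have s1: "finite S1" "S1 \<subseteq> A" "A \<subseteq> span (B \<union> S1)" "independent S1" "span S1 \<inter> B \<subseteq> {0}"
    using S1 unfolding cmpl_def by blast+
  have s2: "finite S2" "S2 \<subseteq> C" "C \<subseteq> span (A \<union> S2)" "independent S2" "span S2 \<inter> A \<subseteq> {0}"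
    using S2 unfolding cmpl_def by blast+
  have spS1: "span S1 \<subseteq> A" by (rule span_minimal[OF s1(2) assms(1)])
  have i12: "span S2 \<inter> span S1 \<subseteq> {0}" using spS1 s2(5) by blast
  have ind: "independent (S1 \<union> S2)" using indep_Un_fin[OF s2(1) s2(4) s1(4) i12] .
  have cov: "C \<subseteq> span (B \<union> (S1 \<union> S2))"
  proof -
    have "A \<union> S2 \<subseteq> span (B \<union> (S1 \<union> S2))"
      using s1(3) span_mono[of "B \<union> S1" "B \<union> (S1 \<union> S2)"] span_superset[of "B \<union> (S1 \<union> S2)"] by blast
    then have "span (A \<union> S2) \<subseteq> span (B \<union> (S1 \<union> S2))" by (rule span_minimal[OF _ subspace_span])
    then show ?thesis using s2(3) by blast
  qed
  have int: "span (S1 \<union> S2) \<inter> B \<subseteq> {0}"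
  proof
    fix x assume x: "x \<in> span (S1 \<union> S2) \<inter> B"
    then obtain y1 y2 where y: "x = y1 + y2" "y1 \<in> span S1" "y2 \<in> span S2" unfolding span_Un by blast
    have xA: "x \<in> A" using x assms(4) by blast
    have y1A: "y1 \<in> A" using y(2) spS1 by blast
    have "y2 = x - y1" using y(1) by simp
    then have "y2 \<in> A" using subspace_diff[OF assms(1) xA y1A] by simp
    then have y20: "y2 = 0" using s2(5) y(3) by blast
    then have "y1 \<in> span S1 \<inter> B" using x y by simp
    then have "y1 = 0" using s1(5) by blast
    then show "x \<in> {0}" using y(1) y20 by simp
  qed
  have sub: "S1 \<union> S2 \<subseteq> C" using s1(2) s2(2) assms(5) by blast
  have c: "cmpl scale C B (S1 \<union> S2)" unfolding cmpl_def using s1(1) s2(1) sub cov ind int by blast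
  have disj: "S1 \<inter> S2 = {}"
  proof -
    { fix z assume z: "z \<in> S1" "z \<in> S2"
      have "z \<in> A" using z(1) s1(2) by blast
      then have "z \<in> span S2 \<inter> A" using span_base[OF z(2)] by blast
      then have "z = 0" using s2(5) by blast
      then have "0 \<in> S2" using z(2) by simp
      then have False using s2(4) dependent_zero[of S2] by blast }
    then show ?thesis by blast
  qed
  then have cu: "card (S1 \<union> S2) = card S1 + card S2" using card_Un_disjoint[OF s1(1) s2(1)] by simp
  have q1: "quot_dim scale C B = enat (card S1 + card S2)" using quot_dim_compl[OF assms(2) c] cu by simp
  have q2: "quot_dim scale C A = enat (card S2)" by (rule quot_dim_compl[OF assms(1) S2])
  have q3: "quot_dim scale A B = enat (card S1)" by (rule quot_dim_compl[OF assms(2) S1])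
  show ?thesis
    by (rule exI[of _ "card S2"], rule exI[of _ "card S1"]) (simp add: q1 q2 q3)
qed

lemma compl_sum:
  assumes "subspace A" "subspace B" "cmpl scale A (A \<inter> B) S"
  shows "cmpl scale (sumset A B) B S"
proof -
  have s: "finite S" "S \<subseteq> A" "A \<subseteq> span ((A \<inter> B) \<union> S)" "independent S"
    "span S \<inter> (A \<inter> B) \<subseteq> {0}" using assms(3) unfolding cmpl_def by blast+
  have AS: "A \<subseteq> sumset A B"
  proof
    fix a assume "a \<in> A"
    then have "a + 0 \<in> sumset A B" by (rule sumset_memI[OF _ subspace_0[OF assms(2)]])
    then show "a \<in> sumset A B" by simp
  qed
  have cov: "sumset A B \<subseteq> span (B \<union> S)"
  proof
    fix x assume "x \<in> sumset A B"
    then obtain a b where ab: "x = a + b" "a \<in> A" "b \<in> B" by (rule sumset_memE)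
    have "a \<in> span (B \<union> S)" using s(3) ab(2) span_mono[of "(A \<inter> B) \<union> S" "B \<union> S"] by blast
    moreover have "b \<in> span (B \<union> S)" using ab(3) span_superset[of "B \<union> S"] by blast
    ultimately have "a + b \<in> span (B \<union> S)" by (rule span_add)
    then show "x \<in> span (B \<union> S)" using ab(1) by simp
  qed
  have "span S \<subseteq> A" by (rule span_minimal[OF s(2) assms(1)])
  then have int: "span S \<inter> B \<subseteq> {0}" using s(5) by blast
  have "S \<subseteq> sumset A B" using s(2) AS by (rule order_trans)
  then show ?thesis unfolding cmpl_def using s(1) s(4) cov int by blast
qed

lemma proj_fin:
  assumes "subspace F" "subspace G" "finite T" "F \<subseteq> span (G \<union> T)"
  shows "\<exists>S'. finite S' \<and> S' \<subseteq> F \<and> F \<subseteq> span ((F \<inter> G) \<union> S')"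
proof -
  let ?A = "sumset F G"
  have sA: "subspace ?A" using subspace_sums[OF assms(1,2)] unfolding sumset_def .
  have GA: "G \<subseteq> ?A"
  proof
    fix g assume "g \<in> G"
    then have "0 + g \<in> ?A" by (rule sumset_memI[OF subspace_0[OF assms(1)]])
    then show "g \<in> ?A" by simp
  qed
  have FA: "F \<subseteq> ?A"
  proof
    fix f assume "f \<in> F"
    then have "f + 0 \<in> ?A" by (rule sumset_memI[OF _ subspace_0[OF assms(2)]])
    then show "f \<in> ?A" by simp
  qed
  have "?A \<subseteq> span (G \<union> T)"
  proof
    fix x assume "x \<in> ?A"
    then obtain f g where fg: "x = f + g" "f \<in> F" "g \<in> G" by (rule sumset_memE)
    have "f \<in> span (G \<union> T)" using fg(2) assms(4) by blast
    moreover have "g \<in> span (G \<union> T)" using fg(3) span_superset[of "G \<union> T"] by blast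
    ultimately have "f + g \<in> span (G \<union> T)" by (rule span_add)
    then show "x \<in> span (G \<union> T)" using fg(1) by simp
  qed
  then obtain S where S: "finite S" "S \<subseteq> ?A" "?A \<subseteq> span (G \<union> S)"
    using fin_reduce[OF sA assms(2) GA assms(3)] by blast
  have "\<forall>s\<in>S. \<exists>f. f \<in> F \<and> s - f \<in> G"
  proof
    fix s assume "s \<in> S"
    then have "s \<in> ?A" using S(2) by blast
    then obtain f g where fg: "s = f + g" "f \<in> F" "g \<in> G" by (rule sumset_memE)
    then have "s - f \<in> G" by simp
    then show "\<exists>f. f \<in> F \<and> s - f \<in> G" using fg(2) by blast
  qed
  then obtain pf where pf: "\<forall>s\<in>S. pf s \<in> F \<and> s - pf s \<in> G" by metis
  define S' where "S' = pf ` S"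
  have "G \<union> S \<subseteq> span (G \<union> S')"
  proof
    fix s assume s: "s \<in> G \<union> S"
    show "s \<in> span (G \<union> S')"
    proof (cases "s \<in> G")
      case True then show ?thesis using span_superset[of "G \<union> S'"] by blast
    next
      case False
      then have sS: "s \<in> S" using s by blast
      have "s - pf s \<in> G" using pf sS by blast
      then have "s - pf s \<in> span (G \<union> S')" using span_superset[of "G \<union> S'"] by blast
      moreover have "pf s \<in> S'" using sS unfolding S'_def by blast
      then have "pf s \<in> span (G \<union> S')" using span_superset[of "G \<union> S'"] by blast
      ultimately have "(s - pf s) + pf s \<in> span (G \<union> S')" by (rule span_add)
      then show ?thesis by simp
    qed
  qed
  then have "span (G \<union> S) \<subseteq> span (G \<union> S')" by (rule span_minimal[OF _ subspace_span])
  then have F1: "F \<subseteq> span (G \<union> S')" using FA S(3) by blast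
  have S'F: "S' \<subseteq> F" using pf unfolding S'_def by blast
  have spS'F: "span S' \<subseteq> F" by (rule span_minimal[OF S'F assms(1)])
  have "F \<subseteq> span ((F \<inter> G) \<union> S')"
  proof
    fix f assume f: "f \<in> F"
    then have "f \<in> span (G \<union> S')" using F1 by blast
    then obtain g x where gx: "f = g + x" "g \<in> span G" "x \<in> span S'" unfolding span_Un by blast
    have gG: "g \<in> G" using gx(2)[unfolded span_sub[OF assms(2)]] .
    have xF: "x \<in> F" using gx(3) spS'F by blast
    have "g = f - x" using gx(1) by simp
    then have "g \<in> F" using subspace_diff[OF assms(1) f xF] by simp
    then have "g \<in> span ((F \<inter> G) \<union> S')" using gG span_superset[of "(F \<inter> G) \<union> S'"] by blast
    moreover have "x \<in> span ((F \<inter> G) \<union> S')" using gx(3) span_mono[of S' "(F \<inter> G) \<union> S'"] by blast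
    ultimately have "g + x \<in> span ((F \<inter> G) \<union> S')" by (rule span_add)
    then show "f \<in> span ((F \<inter> G) \<union> S')" using gx(1) by simp
  qed
  moreover have "finite S'" unfolding S'_def using S(1) by simp
  ultimately show ?thesis using S'F by blast
qed

lemma quot_sum_eq:
  assumes "subspace F" "subspace G" "finite T" "F \<subseteq> span (G \<union> T)"
  shows "\<exists>n. quot_dim scale (sumset F G) G = enat n \<and> quot_dim scale F (F \<inter> G) = enat n"
proof -
  obtain S' where S': "finite S'" "S' \<subseteq> F" "F \<subseteq> span ((F \<inter> G) \<union> S')" using proj_fin[OF assms] by blast
  obtain S where S: "cmpl scale F (F \<inter> G) S"
    using compl_exists2[OF assms(1) subspace_inter[OF assms(1,2)] Int_lower1 S'(1) S'(3)] by blast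
  have "cmpl scale (sumset F G) G S" using compl_sum[OF assms(1,2) S] .
  then have "quot_dim scale (sumset F G) G = enat (card S)" by (rule quot_dim_compl[OF assms(2)])
  moreover have "quot_dim scale F (F \<inter> G) = enat (card S)"
    by (rule quot_dim_compl[OF subspace_inter[OF assms(1,2)] S])
  ultimately show ?thesis by blast
qed

lemma quot_fd:
  assumes "subspace B" "B \<subseteq> U" "U = span Ub" "finite Ub"
  shows "quot_dim scale U B = enat (dim U - dim B) \<and> dim B \<le> dim U"
proof -
  have sU: "subspace U" unfolding assms(3) by (rule subspace_span)
  have UbU: "Ub \<subseteq> U" unfolding assms(3) by (rule span_superset)
  have "U \<subseteq> span (B \<union> Ub)" unfolding assms(3) by (rule span_mono) blast
  then obtain S where S: "cmpl scale U B S" using compl_exists2[OF sU assms(1,2,4)] by blast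
  have s: "finite S" "S \<subseteq> U" "U \<subseteq> span (B \<union> S)" "independent S" "span S \<inter> B \<subseteq> {0}"
    using S unfolding cmpl_def by blast+
  obtain C where C: "C \<subseteq> B" "independent C" "B \<subseteq> span C" "card C = dim B" by (rule basis_exists)
  have spC: "span C = B" by (rule span_subspace[OF C(1) C(3) assms(1)])
  have "C \<subseteq> span Ub" using C(1) assms(2,3) by blast
  then have fC: "finite C" using independent_span_bound[OF assms(4) C(2)] by blast
  have iCS: "independent (C \<union> S)" using indep_Un_fin[OF s(1) s(4) C(2)] s(5) spC by auto
  have "span (S \<union> B) = span (S \<union> C)" using span_Un_span2[of S C] unfolding spC .
  then have "span (B \<union> S) = span (C \<union> S)" by (simp add: Un_commute)
  then have c2: "U \<subseteq> span (C \<union> S)" using s(3) by simp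
  have c1: "C \<union> S \<subseteq> U" using C(1) assms(2) s(2) by blast
  have cd: "card (C \<union> S) = dim U" by (rule basis_card_eq_dim[OF c1 c2 iCS])
  have "C \<inter> S = {}"
  proof -
    { fix z assume z: "z \<in> C" "z \<in> S"
      have "z \<in> B" using z(1) C(1) by blast
      then have "z \<in> span S \<inter> B" using span_base[OF z(2)] by blast
      then have "z = 0" using s(5) by blast
      then have "0 \<in> S" using z(2) by simp
      then have False using s(4) dependent_zero[of S] by blast }
    then show ?thesis by blast
  qed
  then have e: "dim U = dim B + card S" using card_Un_disjoint[OF fC s(1)] C(4) cd by simp
  have q: "quot_dim scale U B = enat (card S)" by (rule quot_dim_compl[OF assms(1) S])
  have "card S = dim U - dim B" using e by simp
  then have "quot_dim scale U B = enat (dim U - dim B)" using q by simp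
  moreover have "dim B \<le> dim U" using e by simp
  ultimately show ?thesis by blast
qed


lemma key:
  assumes "subspace F" "subspace G" "U = span Ub" "finite Ub" "F \<subseteq> sumset G U" "G \<subseteq> sumset F U"
  shows "quot_dim scale (sumset G U) (sumset F G) \<noteq> \<infinity> \<and>
    enat (dim U - dim (G \<inter> U)) = quot_dim scale (sumset G U) (sumset F G) + quot_dim scale F (F \<inter> G) \<and>
    dim (G \<inter> U) \<le> dim U"
proof -
  have sU: "subspace U" unfolding assms(3) by (rule subspace_span)
  define X where "X = sumset G U"
  have "X = span (G \<union> U)" unfolding X_def by (rule sumset_span[OF assms(2) sU])
  also have "\<dots> = span (G \<union> Ub)" unfolding assms(3) by (rule span_Un_span2)
  finally have X: "X = span (G \<union> Ub)" .
  have sX: "subspace X" unfolding X by (rule subspace_span)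
  have FG: "sumset F G = span (F \<union> G)" by (rule sumset_span[OF assms(1,2)])
  have sFG: "subspace (sumset F G)" unfolding FG by (rule subspace_span)
  have GFG: "G \<subseteq> sumset F G" unfolding FG using span_superset[of "F \<union> G"] by blast
  have FX: "F \<subseteq> X" using assms(5) unfolding X_def .
  have GX: "G \<subseteq> X" unfolding X using span_superset[of "G \<union> Ub"] by blast
  have "F \<union> G \<subseteq> X" using FX GX by blast
  then have FGX: "sumset F G \<subseteq> X" unfolding FG by (rule span_minimal[OF _ sX])
  have XT: "X \<subseteq> span (G \<union> Ub)" unfolding X ..
  obtain n m where nm: "quot_dim scale X (sumset F G) = enat n" "quot_dim scale (sumset F G) G = enat m"
      "quot_dim scale X G = enat (n + m)"
    using quot_add[OF sFG assms(2) sX GFG FGX assms(4) XT] by blast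
  have "F \<subseteq> span (G \<union> Ub)" using FX unfolding X .
  then obtain k where k: "quot_dim scale (sumset F G) G = enat k" "quot_dim scale F (F \<inter> G) = enat k"
    using quot_sum_eq[OF assms(1,2,4)] by blast
  have "span (G \<union> Ub) \<supseteq> span Ub" by (rule span_mono) blast
  then have "U \<subseteq> span (G \<union> Ub)" unfolding assms(3) .
  then obtain j where j: "quot_dim scale (sumset U G) G = enat j" "quot_dim scale U (U \<inter> G) = enat j"
    using quot_sum_eq[OF sU assms(2,4)] by blast
  have "sumset U G = span (U \<union> G)" by (rule sumset_span[OF sU assms(2)])
  also have "\<dots> = span (G \<union> U)" by (simp add: Un_commute)
  also have "\<dots> = X" using \<open>X = span (G \<union> U)\<close> by simp
  finally have UGX: "sumset U G = X" .
  have "U \<inter> G \<subseteq> U" by blast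
  then have q3: "quot_dim scale U (U \<inter> G) = enat (dim U - dim (U \<inter> G)) \<and> dim (U \<inter> G) \<le> dim U"
    by (rule quot_fd[OF subspace_inter[OF sU assms(2)] _ assms(3,4)])
  have GU: "G \<inter> U = U \<inter> G" by blast
  have e1: "n + m = j" using nm(3) j(1) UGX by simp
  have e2: "j = dim U - dim (U \<inter> G)" using j(2) q3 by simp
  have e3: "m = k" using nm(2) k(1) by simp
  show ?thesis unfolding X_def[symmetric] GU using nm(1) k(2) e1 e2 e3 q3 by simp
qed

lemma key2:
  assumes "subspace F" "subspace G" "U = span Ub" "finite Ub" "F \<subseteq> sumset G U" "G \<subseteq> sumset F U"
  shows "quot_dim scale F (F \<inter> G) = quot_dim scale G (F \<inter> G) \<longleftrightarrow> dim (F \<inter> U) = dim (G \<inter> U)"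
proof -
  have sU: "subspace U" unfolding assms(3) by (rule subspace_span)
  have a: "sumset G U = span (G \<union> U)" by (rule sumset_span[OF assms(2) sU])
  have b: "sumset F U = span (F \<union> U)" by (rule sumset_span[OF assms(1) sU])
  have "F \<union> U \<subseteq> span (G \<union> U)" using assms(5) a span_superset[of "G \<union> U"] by blast
  then have 1: "span (F \<union> U) \<subseteq> span (G \<union> U)" by (rule span_minimal[OF _ subspace_span])
  have "G \<union> U \<subseteq> span (F \<union> U)" using assms(6) b span_superset[of "F \<union> U"] by blast
  then have 2: "span (G \<union> U) \<subseteq> span (F \<union> U)" by (rule span_minimal[OF _ subspace_span])
  have e1: "sumset G U = sumset F U" using 1 2 a b by blast
  have e2: "sumset G F = sumset F G"
    using sumset_span[OF assms(1,2)] sumset_span[OF assms(2,1)] by (simp add: Un_commute)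
  have GF: "G \<inter> F = F \<inter> G" by blast
  note A = key[OF assms]
  note B = key[OF assms(2,1,3,4,6,5)]
  obtain r where r: "quot_dim scale (sumset G U) (sumset F G) = enat r" using A by (cases "quot_dim scale (sumset G U) (sumset F G)") auto
  have 1: "enat (dim U - dim (G \<inter> U)) = enat r + quot_dim scale F (F \<inter> G)" using A r by simp
  have 2: "enat (dim U - dim (F \<inter> U)) = enat r + quot_dim scale G (F \<inter> G)"
    using B r unfolding e1 e2 GF by simp
  obtain a where a: "quot_dim scale F (F \<inter> G) = enat a"
    using 1 by (cases "quot_dim scale F (F \<inter> G)") auto
  obtain b where b: "quot_dim scale G (F \<inter> G) = enat b"
    using 2 by (cases "quot_dim scale G (F \<inter> G)") auto
  have x1: "dim U - dim (G \<inter> U) = r + a" using 1 a by simp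
  have x2: "dim U - dim (F \<inter> U) = r + b" using 2 b by simp
  have y1: "dim (G \<inter> U) \<le> dim U" using A by blast
  have y2: "dim (F \<inter> U) \<le> dim U" using B by blast
  show ?thesis unfolding a b using x1 x2 y1 y2 by auto
qed

lemma fin_dim_span: "fin_dim scale U \<Longrightarrow> \<exists>Ub. finite Ub \<and> U = span Ub"
  unfolding fin_dim_def by blast

lemma key3:
  assumes "subspace F" "subspace G" "fin_dim scale U" "F \<subseteq> sumset G U" "G \<subseteq> sumset F U"
  shows "dim (F \<inter> U) = dim (G \<inter> U) \<longleftrightarrow> quot_dim scale F (F \<inter> G) = quot_dim scale G (F \<inter> G)"
proof -
  obtain Ub where "finite Ub" "U = span Ub" using fin_dim_span[OF assms(3)] by blast
  then show ?thesis using key2[OF assms(1,2) \<open>U = span Ub\<close> \<open>finite Ub\<close> assms(4,5)] by simp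
qed

lemma sumset_mono2: "U \<subseteq> U' \<Longrightarrow> F \<subseteq> sumset G U \<Longrightarrow> F \<subseteq> sumset G U'"
  unfolding sumset_def by blast

lemma key4:
  assumes "subspace F" "subspace G" "fin_dim scale U" "fin_dim scale U'" "U \<subseteq> U'"
    "F \<subseteq> sumset G U" "G \<subseteq> sumset F U" "dim (F \<inter> U) = dim (G \<inter> U)"
  shows "dim (F \<inter> U') = dim (G \<inter> U')"
proof -
  have i1: "F \<subseteq> sumset G U'" by (rule sumset_mono2[OF assms(5,6)])
  have i2: "G \<subseteq> sumset F U'" by (rule sumset_mono2[OF assms(5,7)])
  have "quot_dim scale F (F \<inter> G) = quot_dim scale G (F \<inter> G)"
    using key3[OF assms(1,2,3,6,7)] assms(8) by simp
  then show ?thesis using key3[OF assms(1,2,4) i1 i2] by simp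
qed

lemma sumset_fin:
  assumes "fin_dim scale U" "fin_dim scale W"
  shows "fin_dim scale (sumset U W) \<and> subspace (sumset U W) \<and> U \<subseteq> sumset U W \<and> W \<subseteq> sumset U W"
proof -
  obtain Su where Su: "finite Su" "U = span Su" using fin_dim_span[OF assms(1)] by blast
  obtain Sw where Sw: "finite Sw" "W = span Sw" using fin_dim_span[OF assms(2)] by blast
  have e: "sumset U W = span (Su \<union> Sw)" unfolding Su(2) Sw(2) sumset_def span_Un by simp
  have "fin_dim scale (sumset U W)" unfolding fin_dim_def e using Su(1) Sw(1) by blast
  moreover have "subspace (sumset U W)" unfolding e by (rule subspace_span)
  moreover have "U \<subseteq> span (Su \<union> Sw)" unfolding Su(2) by (rule span_mono) blast
  moreover have "W \<subseteq> span (Su \<union> Sw)" unfolding Sw(2) by (rule span_mono) blast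
  ultimately show ?thesis unfolding e by blast
qed

lemma fin_dim_subspace: "fin_dim scale U \<Longrightarrow> subspace U"
  unfolding fin_dim_def by auto

lemma sumset_trans: "F \<subseteq> sumset G U \<Longrightarrow> G \<subseteq> sumset H W \<Longrightarrow> F \<subseteq> sumset H (sumset U W)"
proof
  fix f assume a: "F \<subseteq> sumset G U" "G \<subseteq> sumset H W" "f \<in> F"
  then obtain g u where gu: "f = g + u" "g \<in> G" "u \<in> U" unfolding sumset_def by blast
  then obtain h w where hw: "g = h + w" "h \<in> H" "w \<in> W" using a(2) unfolding sumset_def by blast
  have "f = h + (u + w)" using gu(1) hw(1) by (simp add: algebra_simps)
  then show "f \<in> sumset H (sumset U W)" unfolding sumset_def using hw(2) gu(3) hw(3) by blast
qed

lemma sumset_comm_sub: "sumset U W \<subseteq> sumset W U"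
proof
  fix x assume "x \<in> sumset U W"
  then obtain a b where ab: "x = a + b" "a \<in> U" "b \<in> W" by (rule sumset_memE)
  then have "x = b + a" by (simp add: add.commute)
  then show "x \<in> sumset W U" using sumset_memI[OF ab(3) ab(2)] by simp
qed

lemma sumset_comm: "sumset U W = sumset W U"
  using sumset_comm_sub[of U W] sumset_comm_sub[of W U] by blast

end

lemma commE:
  assumes "commensurable scale E FF GG"
  obtains phi U where "weakly_compatible scale FF E" "weakly_compatible scale GG E" "bij_betw phi FF GG"
    "\<forall>F1\<in>FF. \<forall>F2\<in>FF. F1 \<subseteq> F2 \<longrightarrow> phi F1 \<subseteq> phi F2"
    "Subsp scale U" "fin_dim scale U"
    "\<forall>F\<in>FF. F \<subseteq> sumset (phi F) U \<and> phi F \<subseteq> sumset F U \<and> Dim scale (F \<inter> U) = Dim scale (phi F \<inter> U)"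
  using assms unfolding commensurable_def
  apply (elim conjE exE)
  apply (rule that)
       apply assumption+
  done

lemma commE':
  assumes "commensurable' scale E FF GG"
  obtains phi U where "weakly_compatible scale FF E" "weakly_compatible scale GG E" "bij_betw phi FF GG"
    "\<forall>F1\<in>FF. \<forall>F2\<in>FF. F1 \<subseteq> F2 \<longrightarrow> phi F1 \<subseteq> phi F2"
    "Subsp scale U" "fin_dim scale U"
    "\<forall>F\<in>FF. F \<subseteq> sumset (phi F) U \<and> phi F \<subseteq> sumset F U \<and>
       quot_dim scale F (F \<inter> phi F) = quot_dim scale (phi F) (F \<inter> phi F)"
  using assms unfolding commensurable'_def
  apply (elim conjE exE)
  apply (rule that)
       apply assumption+
  done

lemma commI:
  assumes "weakly_compatible scale FF E" "weakly_compatible scale GG E" "bij_betw phi FF GG"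
    "\<forall>F1\<in>FF. \<forall>F2\<in>FF. F1 \<subseteq> F2 \<longrightarrow> phi F1 \<subseteq> phi F2"
    "Subsp scale U" "fin_dim scale U"
    "\<forall>F\<in>FF. F \<subseteq> sumset (phi F) U \<and> phi F \<subseteq> sumset F U \<and> Dim scale (F \<inter> U) = Dim scale (phi F \<inter> U)"
  shows "commensurable scale E FF GG"
  unfolding commensurable_def
  by (intro conjI exI[of _ phi] exI[of _ U] assms)

lemma commI':
  assumes "weakly_compatible scale FF E" "weakly_compatible scale GG E" "bij_betw phi FF GG"
    "\<forall>F1\<in>FF. \<forall>F2\<in>FF. F1 \<subseteq> F2 \<longrightarrow> phi F1 \<subseteq> phi F2"
    "Subsp scale U" "fin_dim scale U"
    "\<forall>F\<in>FF. F \<subseteq> sumset (phi F) U \<and> phi F \<subseteq> sumset F U \<and>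
       quot_dim scale F (F \<inter> phi F) = quot_dim scale (phi F) (F \<inter> phi F)"
  shows "commensurable' scale E FF GG"
  unfolding commensurable'_def
  by (intro conjI exI[of _ phi] exI[of _ U] assms)

lemma sumset_zero: "F \<subseteq> sumset F {0}"
  unfolding sumset_def by force

theorem mainTheorem6:
  fixes scale :: "'k::field_char_0 \<Rightarrow> 'v::ab_group_add \<Rightarrow> 'v"
    and E :: "'v set"
  assumes "vector_space scale"
    and "is_basis scale E"
    and "countable E"
  shows "equiv {\<F>. gen_flag scale \<F> \<and> weakly_compatible scale \<F> E}
               {(\<F>, \<G>). commensurable scale E \<F> \<G>} \<and>
         (\<forall>\<F> \<G>. gen_flag scale \<F> \<longrightarrow> gen_flag scale \<G> \<longrightarrow>
           (commensurable scale E \<F> \<G> \<longleftrightarrow> commensurable' scale E \<F> \<G>))"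
proof -
  interpret V: vector_space scale by (rule assms(1))
  define A where "A = {FF. gen_flag scale FF \<and> weakly_compatible scale FF E}"
  define R where "R = {(FF, GG). commensurable scale E FF GG}"
  have sub_of: "V.subspace F" if "gen_flag scale FF" "F \<in> FF" for FF F
    using that unfolding gen_flag_def is_chain_def by blast
  have chain_of: "F1 \<subseteq> F2 \<or> F2 \<subseteq> F1" if "gen_flag scale FF" "F1 \<in> FF" "F2 \<in> FF" for FF F1 F2
    using that unfolding gen_flag_def is_chain_def by blast
  have wc: "gen_flag scale FF" if "weakly_compatible scale FF E" for FF
    using that unfolding weakly_compatible_def by blast
  have part2: "commensurable scale E FF GG \<longleftrightarrow> commensurable' scale E FF GG"
    if gF: "gen_flag scale FF" and gG: "gen_flag scale GG" for FF GG
  proof -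
    have per: "V.dim (F \<inter> U) = V.dim (phi F \<inter> U) \<longleftrightarrow>
        quot_dim scale F (F \<inter> phi F) = quot_dim scale (phi F) (F \<inter> phi F)"
      if "bij_betw phi FF GG" "fin_dim scale U" "F \<in> FF" "F \<subseteq> sumset (phi F) U" "phi F \<subseteq> sumset F U"
      for phi U F
      by (rule V.key3[OF sub_of[OF gF that(3)] sub_of[OF gG bij_betw_apply[OF that(1,3)]] that(2,4,5)])
    show ?thesis
    proof
      assume "commensurable scale E FF GG"
      then obtain phi U where h: "weakly_compatible scale FF E" "weakly_compatible scale GG E" "bij_betw phi FF GG"
        "\<forall>F1\<in>FF. \<forall>F2\<in>FF. F1 \<subseteq> F2 \<longrightarrow> phi F1 \<subseteq> phi F2"
        "V.subspace U" "fin_dim scale U"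
        "\<forall>F\<in>FF. F \<subseteq> sumset (phi F) U \<and> phi F \<subseteq> sumset F U \<and> V.dim (F \<inter> U) = V.dim (phi F \<inter> U)"
        by (rule commE)
      have "\<forall>F\<in>FF. F \<subseteq> sumset (phi F) U \<and> phi F \<subseteq> sumset F U \<and>
          quot_dim scale F (F \<inter> phi F) = quot_dim scale (phi F) (F \<inter> phi F)"
      proof
        fix F assume F: "F \<in> FF"
        then have c: "F \<subseteq> sumset (phi F) U" "phi F \<subseteq> sumset F U" "V.dim (F \<inter> U) = V.dim (phi F \<inter> U)"
          using h(7) by blast+
        then show "F \<subseteq> sumset (phi F) U \<and> phi F \<subseteq> sumset F U \<and>
          quot_dim scale F (F \<inter> phi F) = quot_dim scale (phi F) (F \<inter> phi F)"
          using per[OF h(3) h(6) F c(1) c(2)] by blast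
      qed
      then show "commensurable' scale E FF GG" by (rule commI'[OF h(1-6)])
    next
      assume "commensurable' scale E FF GG"
      then obtain phi U where h: "weakly_compatible scale FF E" "weakly_compatible scale GG E" "bij_betw phi FF GG"
        "\<forall>F1\<in>FF. \<forall>F2\<in>FF. F1 \<subseteq> F2 \<longrightarrow> phi F1 \<subseteq> phi F2"
        "V.subspace U" "fin_dim scale U"
        "\<forall>F\<in>FF. F \<subseteq> sumset (phi F) U \<and> phi F \<subseteq> sumset F U \<and>
           quot_dim scale F (F \<inter> phi F) = quot_dim scale (phi F) (F \<inter> phi F)"
        by (rule commE')
      have "\<forall>F\<in>FF. F \<subseteq> sumset (phi F) U \<and> phi F \<subseteq> sumset F U \<and> V.dim (F \<inter> U) = V.dim (phi F \<inter> U)"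
      proof
        fix F assume F: "F \<in> FF"
        then have c: "F \<subseteq> sumset (phi F) U" "phi F \<subseteq> sumset F U"
          "quot_dim scale F (F \<inter> phi F) = quot_dim scale (phi F) (F \<inter> phi F)"
          using h(7) by blast+
        then show "F \<subseteq> sumset (phi F) U \<and> phi F \<subseteq> sumset F U \<and> V.dim (F \<inter> U) = V.dim (phi F \<inter> U)"
          using per[OF h(3) h(6) F c(1) c(2)] by blast
      qed
      then show "commensurable scale E FF GG" by (rule commI[OF h(1-6)])
    qed
  qed
  have RA: "R \<subseteq> A \<times> A"
  proof
    fix p assume "p \<in> R"
    then obtain FF GG where p: "p = (FF, GG)" "commensurable scale E FF GG" unfolding R_def by blast
    have "weakly_compatible scale FF E \<and> weakly_compatible scale GG E"
      using p(2) unfolding commensurable_def by (elim conjE) (intro conjI, assumption+)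
    then have "weakly_compatible scale FF E" "weakly_compatible scale GG E" by blast+
    then show "p \<in> A \<times> A" using p(1) wc unfolding A_def by blast
  qed
  have refl: "refl_on A R"
  proof (rule refl_onI)
    fix FF assume "FF \<in> A"
    then have wF: "weakly_compatible scale FF E" unfolding A_def by blast
    have s0: "V.subspace {0}" by simp
    have f0: "fin_dim scale {0}" unfolding fin_dim_def by (rule exI[of _ "{}"]) simp
    have mono: "\<forall>F1\<in>FF. \<forall>F2\<in>FF. F1 \<subseteq> F2 \<longrightarrow> id F1 \<subseteq> id F2" by simp
    have "\<forall>F\<in>FF. F \<subseteq> sumset (id F) {0} \<and> id F \<subseteq> sumset F {0} \<and> V.dim (F \<inter> {0}) = V.dim (id F \<inter> {0})"
    proof
      fix F assume "F \<in> FF"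
      show "F \<subseteq> sumset (id F) {0} \<and> id F \<subseteq> sumset F {0} \<and> V.dim (F \<inter> {0}) = V.dim (id F \<inter> {0})"
        using sumset_zero[of F] by simp
    qed
    then have "commensurable scale E FF FF" by (rule commI[OF wF wF bij_betw_id mono s0 f0])
    then show "(FF, FF) \<in> R" unfolding R_def by simp
  qed
  have sym: "sym R"
  proof (rule symI)
    fix FF GG assume "(FF, GG) \<in> R"
    then have "commensurable scale E FF GG" unfolding R_def by simp
    then obtain phi U where h: "weakly_compatible scale FF E" "weakly_compatible scale GG E" "bij_betw phi FF GG"
      "\<forall>F1\<in>FF. \<forall>F2\<in>FF. F1 \<subseteq> F2 \<longrightarrow> phi F1 \<subseteq> phi F2"
      "V.subspace U" "fin_dim scale U"
      "\<forall>F\<in>FF. F \<subseteq> sumset (phi F) U \<and> phi F \<subseteq> sumset F U \<and> V.dim (F \<inter> U) = V.dim (phi F \<inter> U)"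
      by (rule commE)
    have gF: "gen_flag scale FF" by (rule wc[OF h(1)])
    define psi where "psi = inv_into FF phi"
    have bij: "bij_betw psi GG FF" unfolding psi_def by (rule bij_betw_inv_into[OF h(3)])
    have inv_r: "phi (psi G) = G" if "G \<in> GG" for G
      unfolding psi_def by (rule bij_betw_inv_into_right[OF h(3) that])
    have psi_in: "psi G \<in> FF" if "G \<in> GG" for G by (rule bij_betw_apply[OF bij that])
    have mono: "\<forall>G1\<in>GG. \<forall>G2\<in>GG. G1 \<subseteq> G2 \<longrightarrow> psi G1 \<subseteq> psi G2"
    proof (intro ballI impI)
      fix G1 G2 assume G: "G1 \<in> GG" "G2 \<in> GG" "G1 \<subseteq> G2"
      have "psi G1 \<subseteq> psi G2 \<or> psi G2 \<subseteq> psi G1" by (rule chain_of[OF gF psi_in[OF G(1)] psi_in[OF G(2)]])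
      then show "psi G1 \<subseteq> psi G2"
      proof
        assume "psi G2 \<subseteq> psi G1"
        then have "phi (psi G2) \<subseteq> phi (psi G1)" using h(4) psi_in[OF G(1)] psi_in[OF G(2)] by blast
        then have "G2 \<subseteq> G1" using inv_r[OF G(1)] inv_r[OF G(2)] by simp
        then have "G1 = G2" using G(3) by blast
        then show "psi G1 \<subseteq> psi G2" by simp
      qed
    qed
    have cond: "\<forall>G\<in>GG. G \<subseteq> sumset (psi G) U \<and> psi G \<subseteq> sumset G U \<and> V.dim (G \<inter> U) = V.dim (psi G \<inter> U)"
    proof
      fix G assume G: "G \<in> GG"
      have "psi G \<subseteq> sumset (phi (psi G)) U \<and> phi (psi G) \<subseteq> sumset (psi G) U \<and>
          V.dim (psi G \<inter> U) = V.dim (phi (psi G) \<inter> U)" using h(7) psi_in[OF G] by blast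
      then show "G \<subseteq> sumset (psi G) U \<and> psi G \<subseteq> sumset G U \<and> V.dim (G \<inter> U) = V.dim (psi G \<inter> U)"
        unfolding inv_r[OF G] by simp
    qed
    have "commensurable scale E GG FF" by (rule commI[OF h(2) h(1) bij mono h(5) h(6) cond])
    then show "(GG, FF) \<in> R" unfolding R_def by simp
  qed
  have trans: "trans R"
  proof (rule transI)
    fix FF GG HH assume r1: "(FF, GG) \<in> R" and r2: "(GG, HH) \<in> R"
    from r1 have "commensurable scale E FF GG" unfolding R_def by simp
    then obtain phi U where h: "weakly_compatible scale FF E" "weakly_compatible scale GG E" "bij_betw phi FF GG"
      "\<forall>F1\<in>FF. \<forall>F2\<in>FF. F1 \<subseteq> F2 \<longrightarrow> phi F1 \<subseteq> phi F2"
      "V.subspace U" "fin_dim scale U"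
      "\<forall>F\<in>FF. F \<subseteq> sumset (phi F) U \<and> phi F \<subseteq> sumset F U \<and> V.dim (F \<inter> U) = V.dim (phi F \<inter> U)"
      by (rule commE)
    from r2 have "commensurable scale E GG HH" unfolding R_def by simp
    then obtain psi W where k: "weakly_compatible scale GG E" "weakly_compatible scale HH E" "bij_betw psi GG HH"
      "\<forall>F1\<in>GG. \<forall>F2\<in>GG. F1 \<subseteq> F2 \<longrightarrow> psi F1 \<subseteq> psi F2"
      "V.subspace W" "fin_dim scale W"
      "\<forall>F\<in>GG. F \<subseteq> sumset (psi F) W \<and> psi F \<subseteq> sumset F W \<and> V.dim (F \<inter> W) = V.dim (psi F \<inter> W)"
      by (rule commE)
    have gF: "gen_flag scale FF" by (rule wc[OF h(1)])
    have gG: "gen_flag scale GG" by (rule wc[OF h(2)])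
    have gH: "gen_flag scale HH" by (rule wc[OF k(2)])
    define U' where "U' = sumset U W"
    have U': "fin_dim scale U'" "V.subspace U'" "U \<subseteq> U'" "W \<subseteq> U'"
      using V.sumset_fin[OF h(6) k(6)] unfolding U'_def by blast+
    have bij: "bij_betw (psi \<circ> phi) FF HH" by (rule bij_betw_trans[OF h(3) k(3)])
    have phi_in: "phi F \<in> GG" if "F \<in> FF" for F by (rule bij_betw_apply[OF h(3) that])
    have psi_in: "psi G \<in> HH" if "G \<in> GG" for G by (rule bij_betw_apply[OF k(3) that])
    have mono: "\<forall>F1\<in>FF. \<forall>F2\<in>FF. F1 \<subseteq> F2 \<longrightarrow> (psi \<circ> phi) F1 \<subseteq> (psi \<circ> phi) F2"
    proof (intro ballI impI)
      fix F1 F2 assume F: "F1 \<in> FF" "F2 \<in> FF" "F1 \<subseteq> F2"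
      then have "phi F1 \<subseteq> phi F2" using h(4) by blast
      then have "psi (phi F1) \<subseteq> psi (phi F2)" using k(4) phi_in[OF F(1)] phi_in[OF F(2)] by blast
      then show "(psi \<circ> phi) F1 \<subseteq> (psi \<circ> phi) F2" by simp
    qed
    have cond: "\<forall>F\<in>FF. F \<subseteq> sumset ((psi \<circ> phi) F) U' \<and> (psi \<circ> phi) F \<subseteq> sumset F U' \<and>
        V.dim (F \<inter> U') = V.dim ((psi \<circ> phi) F \<inter> U')"
    proof
      fix F assume F: "F \<in> FF"
      define G where "G = phi F"
      define H where "H = psi G"
      have G: "G \<in> GG" unfolding G_def by (rule phi_in[OF F])
      have H: "H \<in> HH" unfolding H_def by (rule psi_in[OF G])
      have hF: "F \<subseteq> sumset G U" "G \<subseteq> sumset F U" "V.dim (F \<inter> U) = V.dim (G \<inter> U)"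
        using h(7) F unfolding G_def by blast+
      have kG: "G \<subseteq> sumset H W" "H \<subseteq> sumset G W" "V.dim (G \<inter> W) = V.dim (H \<inter> W)"
        using k(7) G unfolding H_def by blast+
      have sF: "V.subspace F" by (rule sub_of[OF gF F])
      have sG: "V.subspace G" by (rule sub_of[OF gG G])
      have sH: "V.subspace H" by (rule sub_of[OF gH H])
      have i1: "F \<subseteq> sumset H U'" unfolding U'_def by (rule V.sumset_trans[OF hF(1) kG(1)])
      have "H \<subseteq> sumset F (sumset W U)" by (rule V.sumset_trans[OF kG(2) hF(2)])
      then have i2: "H \<subseteq> sumset F U'" unfolding U'_def using V.sumset_comm[of W U] by simp
      have d1: "V.dim (F \<inter> U') = V.dim (G \<inter> U')"
        by (rule V.key4[OF sF sG h(6) U'(1) U'(3) hF])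
      have d2: "V.dim (G \<inter> U') = V.dim (H \<inter> U')"
        by (rule V.key4[OF sG sH k(6) U'(1) U'(4) kG])
      have "(psi \<circ> phi) F = H" unfolding H_def G_def by simp
      then show "F \<subseteq> sumset ((psi \<circ> phi) F) U' \<and> (psi \<circ> phi) F \<subseteq> sumset F U' \<and>
        V.dim (F \<inter> U') = V.dim ((psi \<circ> phi) F \<inter> U')" using i1 i2 d1 d2 by simp
    qed
    have "commensurable scale E FF HH" by (rule commI[OF h(1) k(2) bij mono U'(2) U'(1) cond])
    then show "(FF, HH) \<in> R" unfolding R_def by simp
  qed
  have "equiv A R" by (rule equivI[OF RA refl sym trans])
  moreover have "\<forall>FF GG. gen_flag scale FF \<longrightarrow> gen_flag scale GG \<longrightarrow>
           (commensurable scale E FF GG \<longleftrightarrow> commensurable' scale E FF GG)"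
    using part2 by blast
  ultimately show ?thesis unfolding A_def R_def by (rule conjI)
qed

end
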